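(* Let the spot price $\pi$ have CDF $F_{\pi}$ and monotonically decreasing density $f_{\pi}$ on $[\underline{\pi},\bar{\pi}]$ with $0\le\underline{\pi}<\bar{\pi}$, and let $t_k,t_e,t_s,t_r>0$ with $\frac{t_e}{2}<t_s<t_e$. Consider the problem (P3): minimize over $(q,p)$ $$\Phi_3(p,q)=q\,t_e\bar{\pi}+\frac{(1-q)t_e}{1-\frac{t_r}{t_k}(1-F_{\pi}(p))}\cdot\frac{\int_{\underline{\pi}}^{p}x f_{\pi}(x)\,dx}{F_{\pi}(p)}$$ subject to $q t_e\le t_s$, $\;\underline{\pi}\le p\le\bar{\pi}$, $\;0\le q\le 1$, $$\frac{(1-q)t_e}{1-\frac{t_r}{t_k}(1-F_{\pi}(p))}\cdot\frac{1}{F_{\pi}(p)}\le t_s,\qquad t_r<\frac{t_k}{2(1-F_{\pi}(p))}.$$ If $(q^*,p^* )$ is an optimal solution of (P3), then $F_{\pi}(p^* )\ge\frac12$.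
   Context: Model (persistent request): a user runs a fraction $q$ of a job (execution time $t_e$, deadline $t_s$) on an on-demand instance at price $\bar{\pi}$ and the rest on a spot instance with bid $p$, where an interrupted job resumes when the bid again exceeds the spot price, incurring a recovery time $t_r$ per resumption; spot prices in slots of length $t_k$ are i.i.d. with CDF $F_{\pi}$ and monotonically decreasing density $f_{\pi}$ on $[\underline{\pi},\bar{\pi}]$. *)

theory Defs
  imports "HOL-Analysis.Analysis"
begin

text \<open>Objective of problem (P3). Parameters: CDF F, density f, lower price bound lo,
  on-demand price hi, slot length tk, execution time te, recovery time tr.\<close>
definition Phi3 :: "(real \<Rightarrow> real) \<Rightarrow> (real \<Rightarrow> real) \<Rightarrow> real \<Rightarrow> real \<Rightarrow> real \<Rightarrow> real \<Rightarrow> real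
                    \<Rightarrow> real \<Rightarrow> real \<Rightarrow> real" where
  "Phi3 F f lo hi tk te tr p q =
     q * te * hi
     + ((1 - q) * te / (1 - (tr / tk) * (1 - F p)))
       * (integral {lo..p} (\<lambda>x. x * f x) / F p)"

text \<open>The condition F p > 0 is the implicit domain condition
  (the objective and the deadline constraint divide by F p). The constraint
  t_r < t_k / (2 (1 - F p)) is written in the equivalent form 2 t_r (1 - F p) < t_k,
  which reads it as vacuous (right-hand side = +infinity) when F p = 1.\<close>
definition feasible_P3 :: "(real \<Rightarrow> real) \<Rightarrow> real \<Rightarrow> real \<Rightarrow> real \<Rightarrow> real \<Rightarrow> real \<Rightarrow> real
                          \<Rightarrow> real \<Rightarrow> real \<Rightarrow> bool" where
  "feasible_P3 F lo hi tk te ts tr q p \<longleftrightarrow>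
     q * te \<le> ts \<and> lo \<le> p \<and> p \<le> hi \<and> 0 \<le> q \<and> q \<le> 1 \<and> F p > 0 \<and>
     ((1 - q) * te / (1 - (tr / tk) * (1 - F p))) * (1 / F p) \<le> ts \<and>
     2 * tr * (1 - F p) < tk"

definition optimal_P3 :: "(real \<Rightarrow> real) \<Rightarrow> (real \<Rightarrow> real) \<Rightarrow> real \<Rightarrow> real \<Rightarrow> real \<Rightarrow> real \<Rightarrow> real
                          \<Rightarrow> real \<Rightarrow> real \<Rightarrow> real \<Rightarrow> bool" where
  "optimal_P3 F f lo hi tk te ts tr q p \<longleftrightarrow>
     feasible_P3 F lo hi tk te ts tr q p \<and>
     (\<forall>q' p'. feasible_P3 F lo hi tk te ts tr q' p' \<longrightarrow>
        Phi3 F f lo hi tk te tr p q \<le> Phi3 F f lo hi tk te tr p' q')"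

end

theory Submission
  imports Defs
begin

lemma xf_integrable:
  fixes f :: "real \<Rightarrow> real"
  assumes "\<And>x. x \<in> {lo..hi} \<Longrightarrow> 0 \<le> f x" and "f integrable_on {lo..hi}"
  shows "(\<lambda>x. x * f x) integrable_on {lo..hi}"
proof -
  have "f absolutely_integrable_on {lo..hi}"
    using nonnegative_absolutely_integrable_1 assms by blast
  moreover have "(\<lambda>x. x) \<in> borel_measurable (lebesgue_on {lo..hi})"
    by (intro continuous_imp_measurable_on_sets_lebesgue) (auto intro: continuous_intros)
  moreover have "bounded ((\<lambda>x. x) ` {lo..hi})" by simp
  ultimately have "(\<lambda>x. x * f x) absolutely_integrable_on {lo..hi}"
    by (intro absolutely_integrable_bounded_measurable_product_real) auto
  then show ?thesis using set_lebesgue_integral_eq_integral(1) by blast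
qed

theorem claim2:
  fixes F f :: "real \<Rightarrow> real" and lo hi tk te ts tr qs ps :: real
  assumes "0 \<le> lo" and "lo < hi"
    and "\<And>x. x \<in> {lo..hi} \<Longrightarrow> 0 \<le> f x"
    and "antimono_on {lo..hi} f"
    and "f integrable_on {lo..hi}"
    and "integral {lo..hi} f = 1"
    and "\<And>x. x \<in> {lo..hi} \<Longrightarrow> F x = integral {lo..x} f"
    and "0 < tk" and "0 < te" and "0 < ts" and "0 < tr"
    and "te / 2 < ts" and "ts < te"
    and "optimal_P3 F f lo hi tk te ts tr qs ps"
  shows "F ps \<ge> 1 / 2"
proof (rule ccontr)
  assume neg: "\<not> F ps \<ge> 1 / 2"
  have feas: "feasible_P3 F lo hi tk te ts tr qs ps" and
    opt: "\<And>q' p'. feasible_P3 F lo hi tk te ts tr q' p' \<Longrightarrow>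
        Phi3 F f lo hi tk te tr ps qs \<le> Phi3 F f lo hi tk te tr p' q'"
    using assms(14) unfolding optimal_P3_def by auto
  have q1: "qs * te \<le> ts" and p1: "lo \<le> ps" "ps \<le> hi" and q2: "0 \<le> qs" "qs \<le> 1"
    and Fp: "F ps > 0"
    and dl: "((1 - qs) * te / (1 - (tr / tk) * (1 - F ps))) * (1 / F ps) \<le> ts"
    and rc: "2 * tr * (1 - F ps) < tk"
    using feas unfolding feasible_P3_def by auto
  define Fp' where "Fp' = F ps"
  define D where "D = 1 - (tr / tk) * (1 - F ps)"
  define I where "I = integral {lo..ps} (\<lambda>x. x * f x)"
  define J where "J = integral {ps..hi} (\<lambda>x. x * f x)"
  define s where "s = (1 - qs) * te / (D * F ps)"
  have xfi: "(\<lambda>x. x * f x) integrable_on {lo..hi}"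
    using xf_integrable assms(3,5) by blast
  have Fhi: "F hi = 1" using assms(6,7) assms(2) by auto
  have IJ: "I + J = integral {lo..hi} (\<lambda>x. x * f x)"
    unfolding I_def J_def using Henstock_Kurzweil_Integration.integral_combine[OF p1 xfi] .
  have fint: "integral {lo..ps} f + integral {ps..hi} f = 1"
    using Henstock_Kurzweil_Integration.integral_combine[OF p1 assms(5)] assms(6) by simp
  have Fps: "F ps = integral {lo..ps} f" using assms(7) p1 by auto
  have Jle: "J \<le> hi * (1 - F ps)"
  proof -
    have "J \<le> integral {ps..hi} (\<lambda>x. hi * f x)"
      unfolding J_def
      apply (rule integral_le)
      using integrable_subinterval_real[OF xfi, of ps hi] p1 apply simp
      using integrable_cmul[OF integrable_subinterval_real[OF assms(5), of ps hi], of hi] p1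
        apply simp
      using assms(3) p1 by (auto intro!: mult_right_mono)
    also have "\<dots> = hi * (1 - F ps)" using fint Fps by simp
    finally show ?thesis .
  qed
  have Mle: "I + J \<le> hi"
  proof -
    have "integral {lo..hi} (\<lambda>x. x * f x) \<le> integral {lo..hi} (\<lambda>x. hi * f x)"
      apply (rule integral_le[OF xfi])
      using integrable_cmul[OF assms(5), of hi] apply simp
      using assms(3) by (auto intro!: mult_right_mono)
    then show ?thesis using IJ assms(6) by simp
  qed
  have r0: "tr / tk > 0" using assms(8,11) by simp
  have D1: "D < 1"
  proof -
    have "(tr / tk) * (1 - F ps) > 0" using r0 neg by (intro mult_pos_pos) auto
    then show ?thesis unfolding D_def by linarith
  qed
  have Dpos: "D > 0"
  proof -
    have "(tr / tk) * (1 - F ps) < 1 / 2" using rc assms(8) neg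
      by (simp add: field_simps)
    then show ?thesis unfolding D_def by linarith
  qed
  have DF: "D * F ps > 0" using Dpos Fp by simp
  have qlt: "qs < 1" 
  proof -
    have "qs * te < 1 * te" using q1 assms(13) by simp
    then show ?thesis using assms(9) by (simp only: mult_less_cancel_right)
  qed
  have spos: "s > 0" unfolding s_def using qlt assms(9) DF by simp
  have sle: "s \<le> ts" 
  proof -
    have "s = ((1 - qs) * te / D) * (1 / F ps)" unfolding s_def by simp
    then show ?thesis using dl unfolding D_def by simp
  qed
  have s_eq: "(1 - qs) * te = s * D * F ps"
  proof -
    have nz: "D * F ps \<noteq> 0" using DF by linarith
    have "s * (D * F ps) = (1 - qs) * te" using nz s_def nonzero_eq_divide_eq by metis
    then show ?thesis by (simp add: mult.assoc)
  qed
  have Phi: "Phi3 F f lo hi tk te tr ps qs = qs * te * hi + s * I"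
    unfolding Phi3_def s_def I_def D_def by simp
  have feas2: "feasible_P3 F lo hi tk te ts tr (1 - ts / te) hi"
    unfolding feasible_P3_def using Fhi assms(2,8,9,10,12,13)
    by (simp add: field_simps)
  have Phi2: "Phi3 F f lo hi tk te tr hi (1 - ts / te) = (te - ts) * hi + ts * (I + J)"
    unfolding Phi3_def using Fhi IJ assms(9) by (simp add: algebra_simps)
  have key: "qs * te * hi + s * I - ((te - ts) * hi + ts * (I + J))
      = (ts - s) * (hi - (I + J)) + s * (hi * (1 - D * F ps) - J)"
  proof -
    have qe: "qs * te = te - s * D * F ps" using s_eq by (simp add: algebra_simps)
    have "qs * te * hi = (te - s * D * F ps) * hi" by (simp only: qe)
    then show ?thesis by (simp add: algebra_simps)
  qed
  have a1: "(ts - s) * (hi - (I + J)) \<ge> 0" using sle Mle by simp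
  have "hi * (1 - D * F ps) - J \<ge> hi * (1 - D * F ps) - hi * (1 - F ps)" using Jle by simp
  moreover have "hi * (1 - D * F ps) - hi * (1 - F ps) = hi * F ps * (1 - D)"
    by (simp add: algebra_simps)
  moreover have "hi * F ps * (1 - D) > 0" using assms(1,2) Fp D1 by simp
  ultimately have a2: "s * (hi * (1 - D * F ps) - J) > 0" using spos by simp
  have "Phi3 F f lo hi tk te tr ps qs > Phi3 F f lo hi tk te tr hi (1 - ts / te)"
    using Phi Phi2 key a1 a2 by linarith
  with opt[OF feas2] show False by linarith
qed

end
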